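(* Let $m\ge1$, let $p_1,\dots,p_m\ge 0$ with $p_1+\cdots+p_m=1$, and let $S$ be a finite nonempty word on $[m]=\{1,\dots,m\}$ all of whose letters have positive probability. Roll a die showing face $i$ with probability $p_i$ independently until $S$ first appears as a block of consecutive outcomes, and let $Y$ be the number of rolls. Then for every integer $n\ge 1$, \[ E(Y^n) = \sum_{\pi\in\Pi_n} |\pi|! \prod_{B\in \pi} \sum_{R\in\operatorname{overlap}(S)} \frac{(1-|R|)^{|B|} - (-|R|)^{|B|}}{P(R)}. \]
   Context: For a word $w=w_1\cdots w_\ell$, $|w|=\ell$ and $P(w)=p_{w_1}\cdots p_{w_\ell}$. An overlap of $S$ is a nonempty word that is both a prefix and a suffix of $S$ (including $S$ itself); $\operatorname{overlap}(S)$ is the set of overlaps. $\Pi_n$ is the set of set partitions of $\{1,\dots,n\}$; $|\pi|$ is the number of blocks of $\pi$ and $|B|$ the size of block $B$. Convention $0^0=1$. *)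

theory Defs
  imports "HOL-Probability.Probability" "HOL-Library.Sublist"
begin

definition die :: "nat \<Rightarrow> (nat \<Rightarrow> real) \<Rightarrow> nat pmf" where
  "die m p = embed_pmf (\<lambda>i. if i \<in> {1..m} then p i else 0)"

definition word_prob :: "(nat \<Rightarrow> real) \<Rightarrow> nat list \<Rightarrow> real" where
  "word_prob p w = prod_list (map p w)"

definition overlaps :: "'a list \<Rightarrow> 'a list set" where
  "overlaps S = {R. R \<noteq> [] \<and> prefix R S \<and> suffix R S}"

definition set_partitions :: "nat \<Rightarrow> nat set set set" where
  "set_partitions n = {P. partition_on {1..n} P}"

definition waiting_time :: "'a list \<Rightarrow> 'a stream \<Rightarrow> nat" where
  "waiting_time S \<omega> = (LEAST k. sublist S (stake k \<omega>))"

end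

theory Submission
  imports Defs
begin


definition parts :: "'a set \<Rightarrow> 'a set set set" where
  "parts A = {P. partition_on A P}"

definition Gp :: "(nat \<Rightarrow> real) \<Rightarrow> 'a set \<Rightarrow> real" where
  "Gp c A = (\<Sum>\<pi>\<in>parts A. fact (card \<pi>) * (\<Prod>B\<in>\<pi>. c (card B)))"

lemma finite_parts: "finite A \<Longrightarrow> finite (parts A)"
  unfolding parts_def by (rule finitely_many_partition_on)

lemma Gp_rec:
  assumes A: "finite A" "A \<noteq> {}"
  shows "Gp c A = (\<Sum>B\<in>Pow A - {{}}. c (card B) * Gp c (A - B))"
proof -
  define g where "g = (\<lambda>(\<pi>::'a set set) B. c (card B) * (fact (card \<pi> - 1) * (\<Prod>B'\<in>\<pi>-{B}. c (card B'))))"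
  have step: "fact (card \<pi>) * (\<Prod>B\<in>\<pi>. c (card B)) = (\<Sum>B\<in>\<pi>. g \<pi> B)" if "\<pi> \<in> parts A" for \<pi>
  proof -
    have pa: "partition_on A \<pi>" using that by (simp add: parts_def)
    have fin: "finite \<pi>" using finite_elements[OF A(1) pa] .
    have ne: "\<pi> \<noteq> {}" using pa A(2) by (auto simp: partition_on_def)
    then have cp: "card \<pi> \<ge> 1" using fin by (simp add: Suc_le_eq card_gt_0_iff)
    have "(\<Sum>B\<in>\<pi>. g \<pi> B) = (\<Sum>B\<in>\<pi>. fact (card \<pi> - 1) * (\<Prod>B\<in>\<pi>. c (card B)))"
      unfolding g_def using fin by (intro sum.cong refl) (simp add: prod.remove[of \<pi>])
    also have "\<dots> = real (card \<pi>) * fact (card \<pi> - 1) * (\<Prod>B\<in>\<pi>. c (card B))" by simp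
    also have "real (card \<pi>) * fact (card \<pi> - 1) = fact (card \<pi>)"
      using cp by (simp add: fact_reduce[of "card \<pi>"])
    finally show ?thesis by simp
  qed
  have "Gp c A = (\<Sum>\<pi>\<in>parts A. \<Sum>B\<in>\<pi>. g \<pi> B)"
    unfolding Gp_def by (intro sum.cong refl step)
  also have "\<dots> = (\<Sum>(\<pi>,B)\<in>Sigma (parts A) (\<lambda>\<pi>. \<pi>). g \<pi> B)"
    using finite_parts[OF A(1)] finite_elements[OF A(1)] by (subst sum.Sigma) (auto simp: parts_def)
  also have "\<dots> = (\<Sum>(B,\<pi>')\<in>Sigma (Pow A - {{}}) (\<lambda>B. parts (A - B)). g (insert B \<pi>') B)"
  proof (rule sym, rule sum.reindex_bij_witness[where i = "\<lambda>(\<pi>,B). (B, \<pi> - {B})" and j = "\<lambda>(B,\<pi>'). (insert B \<pi>', B)"])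
    fix a assume "a \<in> Sigma (Pow A - {{}}) (\<lambda>B. parts (A - B))"
    then obtain B \<pi>' where a: "a = (B,\<pi>')" "B \<subseteq> A" "B \<noteq> {}" "partition_on (A - B) \<pi>'"
      by (auto simp: parts_def)
    have nin: "B \<notin> \<pi>'" using a(3,4) by (auto simp: partition_on_def)
    have dj: "disjnt B (\<Union>\<pi>')" using a(4) by (auto simp: partition_on_def disjnt_def)
    show "(\<lambda>(\<pi>, B). (B, \<pi> - {B})) ((\<lambda>(B, \<pi>'). (insert B \<pi>', B)) a) = a"
      using a nin by auto
    show "(\<lambda>(B, \<pi>'). (insert B \<pi>', B)) a \<in> Sigma (parts A) (\<lambda>\<pi>. \<pi>)"
      using a partition_on_insert[OF dj, of A] by (auto simp: parts_def)
    show "(case (\<lambda>(B, \<pi>'). (insert B \<pi>', B)) a of (\<pi>, B) \<Rightarrow> g \<pi> B) = (case a of (B, \<pi>') \<Rightarrow> g (insert B \<pi>') B)"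
      using a by auto
  next
    fix a assume "a \<in> Sigma (parts A) (\<lambda>\<pi>. \<pi>)"
    then obtain \<pi> B where a: "a = (\<pi>,B)" "partition_on A \<pi>" "B \<in> \<pi>"
      by (auto simp: parts_def)
    have dj: "disjnt B (\<Union>(\<pi> - {B}))" using a(2,3) 
      by (auto simp: partition_on_def disjnt_def disjoint_def)
    have ins: "insert B (\<pi> - {B}) = \<pi>" using a by auto
    show "(\<lambda>(B, \<pi>'). (insert B \<pi>', B)) ((\<lambda>(\<pi>, B). (B, \<pi> - {B})) a) = a"
      using a ins by auto
    show "(\<lambda>(\<pi>, B). (B, \<pi> - {B})) a \<in> Sigma (Pow A - {{}}) (\<lambda>B. parts (A - B))"
      using a partition_on_insert[OF dj, of A] ins by (auto simp: parts_def)
  qed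
  also have "\<dots> = (\<Sum>B\<in>Pow A - {{}}. \<Sum>\<pi>'\<in>parts (A - B). g (insert B \<pi>') B)"
    using A(1) finite_parts by (subst sum.Sigma) auto
  also have "\<dots> = (\<Sum>B\<in>Pow A - {{}}. c (card B) * Gp c (A - B))"
  proof (intro sum.cong refl)
    fix B assume B: "B \<in> Pow A - {{}}"
    show "(\<Sum>\<pi>'\<in>parts (A - B). g (insert B \<pi>') B) = c (card B) * Gp c (A - B)"
      unfolding Gp_def sum_distrib_left
    proof (intro sum.cong refl)
      fix \<pi>' assume "\<pi>' \<in> parts (A - B)"
      then have pa: "partition_on (A - B) \<pi>'" by (simp add: parts_def)
      have nin: "B \<notin> \<pi>'" using B pa by (auto simp: partition_on_def)
      have fin: "finite \<pi>'" using finite_elements[OF _ pa] A(1) by simp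
      show "g (insert B \<pi>') B = c (card B) * (fact (card \<pi>') * (\<Prod>B\<in>\<pi>'. c (card B)))"
        unfolding g_def using nin fin by simp
    qed
  qed
  finally show ?thesis .
qed

function H :: "(nat \<Rightarrow> real) \<Rightarrow> nat \<Rightarrow> real" where
  "H c n = (if n = 0 then 1 else (\<Sum>k\<in>{1..n}. real (n choose k) * c k * H c (n - k)))"
  by pat_completeness auto
termination by (relation "Wellfounded.measure snd") auto

declare H.simps[simp del]

lemma Gp_H:
  assumes "finite A"
  shows "Gp c A = H c (card A)"
  using assms
proof (induction "card A" arbitrary: A rule: less_induct)
  case less
  show ?case
  proof (cases "A = {}")
    case True
    then show ?thesis
      by (simp add: Gp_def parts_def partition_on_empty H.simps)
  next
    case False
    define n where "n = card A"
    have n0: "n > 0" using False less.prems n_def by (simp add: card_gt_0_iff)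
    have "Gp c A = (\<Sum>B\<in>Pow A - {{}}. c (card B) * H c (n - card B))"
    proof (subst Gp_rec[OF less.prems False], intro sum.cong refl)
      fix B assume B: "B \<in> Pow A - {{}}"
      then have fB: "finite B" using less.prems by (auto intro: finite_subset)
      then have "card B > 0" using B by (auto simp: card_gt_0_iff)
      moreover have "card B \<le> card A" using B less.prems by (auto intro: card_mono)
      ultimately have lt: "card (A - B) < card A" and cAB: "card (A - B) = n - card B"
        using B less.prems fB by (auto simp: card_Diff_subset n_def)
      show "c (card B) * Gp c (A - B) = c (card B) * H c (n - card B)"
        using less.hyps[OF lt] less.prems cAB by simp
    qed
    also have "\<dots> = (\<Sum>k\<in>{1..n}. \<Sum>B\<in>{B \<in> Pow A - {{}}. card B = k}. c (card B) * H c (n - card B))"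
    proof (rule sym, rule sum.group)
      show "finite (Pow A - {{}})" using less.prems by simp
      show "card ` (Pow A - {{}}) \<subseteq> {1..n}"
      proof
        fix x assume "x \<in> card ` (Pow A - {{}})"
        then obtain B where B: "B \<subseteq> A" "B \<noteq> {}" "x = card B" by auto
        have "finite B" using B less.prems finite_subset by blast
        then show "x \<in> {1..n}" using B less.prems
          by (auto simp: n_def card_mono Suc_le_eq card_gt_0_iff)
      qed
    qed simp
    also have "\<dots> = (\<Sum>k\<in>{1..n}. real (n choose k) * c k * H c (n - k))"
    proof (intro sum.cong refl)
      fix k assume k: "k \<in> {1..n}"
      have eq: "{B \<in> Pow A - {{}}. card B = k} = {B. B \<subseteq> A \<and> card B = k}"
        using k by auto
      have "(\<Sum>B\<in>{B \<in> Pow A - {{}}. card B = k}. c (card B) * H c (n - card B))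
          = (\<Sum>B\<in>{B \<in> Pow A - {{}}. card B = k}. c k * H c (n - k))"
        by (intro sum.cong refl) auto
      also have "\<dots> = real (card {B. B \<subseteq> A \<and> card B = k}) * (c k * H c (n - k))"
        unfolding eq by simp
      also have "card {B. B \<subseteq> A \<and> card B = k} = n choose k"
        using n_subsets[OF less.prems] n_def by simp
      finally show "(\<Sum>B\<in>{B \<in> Pow A - {{}}. card B = k}. c (card B) * H c (n - card B))
          = real (n choose k) * c k * H c (n - k)" by simp
    qed
    also have "\<dots> = H c n" using n0 by (subst (2) H.simps) simp
    finally show ?thesis by (simp add: n_def)
  qed
qed

lemma set_partitions_H:
  "(\<Sum>\<pi>\<in>set_partitions n. fact (card \<pi>) * (\<Prod>B\<in>\<pi>. c (card B))) = H c n"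
  using Gp_H[of "{1..n}" c] by (simp add: Gp_def parts_def set_partitions_def)



lemma poly_sums:
  fixes q :: "nat \<Rightarrow> real" and y :: real
  assumes summ: "\<And>i. summable (\<lambda>j. real j ^ i * q j)"
  shows "(\<lambda>j. (real j + y) ^ n * q j) sums (\<Sum>i\<le>n. real (n choose i) * y ^ i * (\<Sum>j. real j ^ (n - i) * q j))"
proof -
  have "(\<lambda>j. \<Sum>i\<le>n. real (n choose i) * y ^ i * (real j ^ (n - i) * q j)) sums
        (\<Sum>i\<le>n. real (n choose i) * y ^ i * (\<Sum>j. real j ^ (n - i) * q j))"
    by (intro sums_sum sums_mult summable_sums summ)
  moreover have "(real j + y) ^ n * q j = (\<Sum>i\<le>n. real (n choose i) * y ^ i * (real j ^ (n - i) * q j))" for j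
    by (subst add.commute, subst binomial_ring) (simp add: sum_distrib_right mult.assoc)
  ultimately show ?thesis by simp
qed

lemma moment_recursion:
  fixes q a :: "nat \<Rightarrow> real" and Ov :: "'b set" and len :: "'b \<Rightarrow> nat" and w :: "'b \<Rightarrow> real"
  assumes finO: "finite Ov"
    and q0: "q 0 = 0"
    and qa: "\<And>k. q (Suc k) = a k - a (Suc k)"
    and aq: "\<And>k. a k = (\<Sum>R\<in>Ov. q (k + len R) / w R)"
    and qsmall: "\<And>R j. R \<in> Ov \<Longrightarrow> j < len R \<Longrightarrow> q j = 0"
    and a0: "a 0 = 1"
    and alim: "a \<longlonglongrightarrow> 0"
    and summ: "\<And>i. summable (\<lambda>j. real j ^ i * q j)"
  shows "(\<Sum>j. real j ^ n * q j) = H (\<lambda>k. \<Sum>R\<in>Ov. ((1 - real (len R)) ^ k - (- real (len R)) ^ k) / w R) n"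
proof -
  define c where "c = (\<lambda>k. \<Sum>R\<in>Ov. ((1 - real (len R)) ^ k - (- real (len R)) ^ k) / w R)"
  define M where "M = (\<lambda>n. (\<Sum>j. real j ^ n * q j))"
  have M0: "M 0 = 1"
  proof -
    have "(\<lambda>k. a k - a (Suc k)) sums (a 0 - 0)" by (rule telescope_sums'[OF alim])
    then have "(\<lambda>k. q (Suc k)) sums 1" using a0 qa by simp
    then have "q sums 1" using q0 by (simp add: sums_Suc_iff)
    then show ?thesis unfolding M_def by (simp add: sums_iff)
  qed
  have Mrec: "M n = (\<Sum>i\<le>n. real (n choose i) * c i * M (n - i))" if n1: "n \<ge> 1" for n
  proof -
    define X1 where "X1 = (\<lambda>R. \<Sum>i\<le>n. real (n choose i) * (1 - real (len R)) ^ i * M (n - i))"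
    define X0 where "X0 = (\<lambda>R. \<Sum>i\<le>n. real (n choose i) * (- real (len R)) ^ i * M (n - i))"
    have key: "(\<lambda>k. real (Suc k) ^ n * (q (k + len R) - q (Suc k + len R)) / w R) sums ((X1 R - X0 R) / w R)"
      if R: "R \<in> Ov" for R
    proof -
      define r where "r = len R"
      have s1: "(\<lambda>j. (real j + (1 - real r)) ^ n * q j) sums X1 R"
        unfolding X1_def M_def r_def by (rule poly_sums[OF summ])
      have s0: "(\<lambda>j. (real j + (- real r)) ^ n * q j) sums X0 R"
        unfolding X0_def M_def r_def by (rule poly_sums[OF summ])
      have z1: "(\<Sum>i<r. (real i + (1 - real r)) ^ n * q i) = 0"
        using qsmall[OF R] by (intro sum.neutral) (simp add: r_def)
      have z0: "(\<Sum>i<Suc r. (real i + (- real r)) ^ n * q i) = 0"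
        using qsmall[OF R] n1 by (intro sum.neutral) (auto simp: r_def less_Suc_eq)
      have t1: "(\<lambda>k. (real (k + r) + (1 - real r)) ^ n * q (k + r)) sums X1 R"
        using s1 z1 by (subst sums_iff_shift[where f = "\<lambda>j. (real j + (1 - real r)) ^ n * q j"]) simp
      have t0: "(\<lambda>k. (real (k + Suc r) + (- real r)) ^ n * q (k + Suc r)) sums X0 R"
        using s0 z0 by (subst sums_iff_shift[where f = "\<lambda>j. (real j + (- real r)) ^ n * q j"]) simp
      have "(\<lambda>k. ((real (k + r) + (1 - real r)) ^ n * q (k + r) - (real (k + Suc r) + (- real r)) ^ n * q (k + Suc r)) / w R)
            sums ((X1 R - X0 R) / w R)"
        by (intro sums_divide sums_diff t1 t0)
      moreover have "((real (k + r) + (1 - real r)) ^ n * q (k + r) - (real (k + Suc r) + (- real r)) ^ n * q (k + Suc r)) / w R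
          = real (Suc k) ^ n * (q (k + len R) - q (Suc k + len R)) / w R" for k
        by (simp add: r_def algebra_simps)
      ultimately show ?thesis by (simp only:)
    qed
    have "(\<lambda>k. \<Sum>R\<in>Ov. real (Suc k) ^ n * (q (k + len R) - q (Suc k + len R)) / w R) sums (\<Sum>R\<in>Ov. (X1 R - X0 R) / w R)"
      by (intro sums_sum key)
    moreover have "(\<Sum>R\<in>Ov. real (Suc k) ^ n * (q (k + len R) - q (Suc k + len R)) / w R) = real (Suc k) ^ n * q (Suc k)" for k
    proof -
      have "q (Suc k) = (\<Sum>R\<in>Ov. q (k + len R) / w R) - (\<Sum>R\<in>Ov. q (Suc k + len R) / w R)"
        by (subst qa) (simp only: aq)
      also have "\<dots> = (\<Sum>R\<in>Ov. (q (k + len R) - q (Suc k + len R)) / w R)"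
        by (simp add: sum_subtractf diff_divide_distrib)
      finally show ?thesis by (simp add: sum_distrib_left mult.assoc)
    qed
    ultimately have "(\<lambda>k. real (Suc k) ^ n * q (Suc k)) sums (\<Sum>R\<in>Ov. (X1 R - X0 R) / w R)" by simp
    then have "(\<lambda>j. real j ^ n * q j) sums ((\<Sum>R\<in>Ov. (X1 R - X0 R) / w R) + real 0 ^ n * q 0)"
      using sums_Suc_iff[of "\<lambda>j. real j ^ n * q j" "\<Sum>R\<in>Ov. (X1 R - X0 R) / w R"] by blast
    then have "(\<lambda>j. real j ^ n * q j) sums (\<Sum>R\<in>Ov. (X1 R - X0 R) / w R)"
      using q0 by simp
    then have "M n = (\<Sum>R\<in>Ov. (X1 R - X0 R) / w R)" unfolding M_def by (simp add: sums_iff)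
    also have "\<dots> = (\<Sum>R\<in>Ov. \<Sum>i\<le>n. real (n choose i) * (((1 - real (len R)) ^ i - (- real (len R)) ^ i) / w R) * M (n - i))"
      unfolding X1_def X0_def
      by (intro sum.cong refl) (simp add: sum_subtractf[symmetric] sum_divide_distrib algebra_simps diff_divide_distrib)
    also have "\<dots> = (\<Sum>i\<le>n. real (n choose i) * c i * M (n - i))"
      unfolding c_def by (subst sum.swap) (simp add: sum_distrib_left sum_distrib_right mult.assoc)
    finally show ?thesis .
  qed
  have "M n = H c n"
  proof (induction n rule: less_induct)
    case (less n)
    show ?case
    proof (cases "n = 0")
      case True then show ?thesis using M0 by (simp add: H.simps)
    next
      case False
      have c0: "c 0 = 0" by (simp add: c_def)
      have "M n = (\<Sum>i\<le>n. real (n choose i) * c i * M (n - i))" using Mrec False by simp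
      also have "\<dots> = (\<Sum>i\<in>{1..n}. real (n choose i) * c i * M (n - i))"
      proof -
        have "{..n} = insert 0 {1..n}" by auto
        then show ?thesis using c0 by simp
      qed
      also have "\<dots> = (\<Sum>i\<in>{1..n}. real (n choose i) * c i * H c (n - i))"
        using False by (intro sum.cong refl) (simp add: less.IH)
      also have "\<dots> = H c n" using False by (subst (2) H.simps) simp
      finally show ?thesis .
    qed
  qed
  then show ?thesis unfolding M_def c_def .
qed



definition Wd :: "nat \<Rightarrow> nat \<Rightarrow> nat list set" where
  "Wd m N = {w. set w \<subseteq> {1..m} \<and> length w = N}"

definition ocfirst :: "'a list \<Rightarrow> 'a list \<Rightarrow> bool" where
  "ocfirst S w \<longleftrightarrow> sublist S w \<and> \<not> sublist S (butlast w)"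

lemma finite_Wd: "finite (Wd m N)"
  unfolding Wd_def by (rule finite_lists_length_eq) simp

lemma word_prob_append: "word_prob p (u @ v) = word_prob p u * word_prob p v"
  by (simp add: word_prob_def)

lemma word_prob_nonneg:
  assumes "\<And>i. i \<in> {1..m} \<Longrightarrow> p i \<ge> 0" "set w \<subseteq> {1..m}"
  shows "word_prob p w \<ge> 0"
  using assms unfolding word_prob_def by (induction w) auto

lemma Wd_Suc: "Wd m (Suc N) = (\<lambda>(xs, n). n # xs) ` (Wd m N \<times> {1..m})"
  unfolding Wd_def by (rule lists_length_Suc_eq)

lemma Wd_add: "Wd m (k + l) = (\<lambda>(u, v). u @ v) ` (Wd m k \<times> Wd m l)"
proof
  show "Wd m (k + l) \<subseteq> (\<lambda>(u, v). u @ v) ` (Wd m k \<times> Wd m l)"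
  proof
    fix w assume "w \<in> Wd m (k + l)"
    then have "w = take k w @ drop k w" "(take k w, drop k w) \<in> Wd m k \<times> Wd m l"
      by (auto simp: Wd_def dest: in_set_takeD in_set_dropD)
    then show "w \<in> (\<lambda>(u, v). u @ v) ` (Wd m k \<times> Wd m l)" by (metis (no_types, lifting) case_prod_conv image_eqI)
  qed
qed (fastforce simp: Wd_def subset_iff)

lemma inj_append_Wd: "inj_on (\<lambda>(u, v). u @ v) (Wd m k \<times> Wd m l)"
  by (auto simp: Wd_def inj_on_def)

lemma sum_Wd_add:
  "(\<Sum>w\<in>Wd m (k + l). word_prob p w * f w) =
   (\<Sum>u\<in>Wd m k. \<Sum>v\<in>Wd m l. word_prob p u * word_prob p v * f (u @ v))"
proof -
  have "(\<Sum>w\<in>Wd m (k + l). word_prob p w * f w) = (\<Sum>(u,v)\<in>Wd m k \<times> Wd m l. word_prob p (u @ v) * f (u @ v))"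
    unfolding Wd_add by (subst sum.reindex[OF inj_append_Wd]) (simp add: case_prod_beta)
  also have "\<dots> = (\<Sum>u\<in>Wd m k. \<Sum>v\<in>Wd m l. word_prob p u * word_prob p v * f (u @ v))"
    by (subst sum.cartesian_product[symmetric]) (simp add: word_prob_append)
  finally show ?thesis .
qed

lemma sum_Wd_one:
  assumes "(\<Sum>i=1..m. p i) = 1"
  shows "(\<Sum>w\<in>Wd m N. word_prob p w) = 1"
proof (induction N)
  case 0
  have "Wd m 0 = {[]}" by (auto simp: Wd_def)
  then show ?case by (simp add: word_prob_def)
next
  case (Suc N)
  have inj: "inj_on (\<lambda>(xs, n). n # xs) (Wd m N \<times> {1..m})" by (auto simp: inj_on_def)
  have "(\<Sum>w\<in>Wd m (Suc N). word_prob p w) = (\<Sum>(xs,n)\<in>Wd m N \<times> {1..m}. p n * word_prob p xs)"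
    unfolding Wd_Suc by (subst sum.reindex[OF inj]) (simp add: case_prod_beta word_prob_def)
  also have "\<dots> = (\<Sum>xs\<in>Wd m N. \<Sum>n=1..m. word_prob p xs * p n)"
    by (simp add: sum.cartesian_product mult.commute)
  also have "\<dots> = (\<Sum>xs\<in>Wd m N. word_prob p xs) * (\<Sum>n=1..m. p n)"
    by (simp add: sum_product)
  finally show ?case using Suc assms by simp
qed

lemma ocfirst_suffix:
  assumes "ocfirst S w"
  shows "suffix S w"
proof -
  from assms obtain ps ss where w: "w = ps @ S @ ss" and nb: "\<not> sublist S (butlast w)"
    by (auto simp: ocfirst_def sublist_def)
  have "ss = []"
  proof (rule ccontr)
    assume "ss \<noteq> []"
    then have "butlast w = ps @ S @ butlast ss" using w by (simp add: butlast_append)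
    then show False using nb by simp
  qed
  then show ?thesis using w by (simp add: suffix_def)
qed

lemma sublist_mono_prefix: "sublist S u \<Longrightarrow> prefix u v \<Longrightarrow> sublist S v"
  using prefix_imp_sublist sublist_order.order.trans by blast

lemma card_ocfirst:
  assumes S: "S \<noteq> []"
  shows "card {R \<in> overlaps S. ocfirst S (u @ R)} = (if sublist S u then 0 else 1)"
proof (cases "sublist S u")
  case True
  have E: "{R \<in> overlaps S. ocfirst S (u @ R)} = {}"
  proof (safe)
    fix R assume R: "R \<in> overlaps S" "ocfirst S (u @ R)"
    then have "R \<noteq> []" by (simp add: overlaps_def)
    then have "butlast (u @ R) = u @ butlast R" by (simp add: butlast_append)
    then have "sublist S (butlast (u @ R))" using True sublist_mono_prefix by fastforce
    then show "R \<in> {}" using R by (simp add: ocfirst_def)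
  qed
  show ?thesis unfolding E using True by simp
next
  case False
  define Q where "Q = (\<lambda>j. sublist S (u @ take j S))"
  have QS: "Q (length S)" by (simp add: Q_def)
  define j0 where "j0 = (LEAST j. Q j)"
  have Qj0: "Q j0" unfolding j0_def by (rule LeastI[of Q, OF QS])
  have j0le: "j0 \<le> length S" unfolding j0_def by (rule Least_le[of Q, OF QS])
  have j0pos: "j0 \<ge> 1" using Qj0 False by (cases j0) (auto simp: Q_def)
  have notQ: "\<not> Q j" if "j < j0" for j using not_less_Least[of j Q] that by (simp add: j0_def)
  have Qmono: "Q j'" if "Q j" "j \<le> j'" "j' \<le> length S" for j j'
  proof -
    have "prefix (u @ take j S) (u @ take j' S)"
      using that by (simp add: take_is_prefix prefix_def) (metis min.absorb1 take_add take_take le_add_diff_inverse)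
    then show ?thesis unfolding Q_def by (rule sublist_mono_prefix[OF that(1)[unfolded Q_def]])
  qed
  have E: "{R \<in> overlaps S. ocfirst S (u @ R)} = {take j0 S}"
  proof (safe)
    fix R assume R: "R \<in> overlaps S" "ocfirst S (u @ R)"
    then have Rne: "R \<noteq> []" and pR: "prefix R S" by (auto simp: overlaps_def)
    have Rt: "R = take (length R) S" using pR by (metis append_eq_conv_conj prefix_def)
    have lR: "length R \<le> length S" using pR by (simp add: prefix_length_le)
    have QR: "Q (length R)" using R(2) Rt by (simp add: ocfirst_def Q_def)
    have "j0 \<le> length R" unfolding j0_def by (rule Least_le[of Q, OF QR])
    moreover have "\<not> j0 < length R"
    proof
      assume lt: "j0 < length R"
      have "butlast (u @ R) = u @ take (length R - 1) S"
        using Rne Rt by (metis butlast_append butlast_take lR)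
      moreover have "Q (length R - 1)" using Qmono[OF Qj0, of "length R - 1"] lt lR by simp
      ultimately have "sublist S (butlast (u @ R))" by (simp add: Q_def)
      then show False using R(2) by (simp add: ocfirst_def)
    qed
    ultimately show "R = take j0 S" using Rt by simp
  next
    show "take j0 S \<in> overlaps S"
    proof -
      have ne: "take j0 S \<noteq> []" using j0pos S by simp
      have bl: "butlast (u @ take j0 S) = u @ take (j0 - 1) S"
        using ne by (simp add: butlast_append butlast_take j0le)
      have oc: "ocfirst S (u @ take j0 S)"
        using Qj0 notQ[of "j0 - 1"] j0pos bl by (simp add: ocfirst_def Q_def)
      have "suffix S (u @ take j0 S)" by (rule ocfirst_suffix[OF oc])
      moreover have "suffix (take j0 S) (u @ take j0 S)" by (simp add: suffix_def)
      ultimately have "suffix (take j0 S) S"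
        using suffix_length_suffix j0le by (metis length_take min.absorb2)
      then show ?thesis using ne by (simp add: overlaps_def take_is_prefix)
    qed
    show "ocfirst S (u @ take j0 S)"
    proof -
      have ne: "take j0 S \<noteq> []" using j0pos S by simp
      have bl: "butlast (u @ take j0 S) = u @ take (j0 - 1) S"
        using ne by (simp add: butlast_append butlast_take j0le)
      show ?thesis using Qj0 notQ[of "j0 - 1"] j0pos bl by (simp add: ocfirst_def Q_def)
    qed
  qed
  show ?thesis unfolding E using False by simp
qed



lemma finite_overlaps: "finite (overlaps S)"
proof (rule finite_subset)
  show "overlaps S \<subseteq> set (prefixes S)" by (auto simp: overlaps_def)
qed simp

lemma suffix_same_length: "suffix xs ys \<Longrightarrow> length xs = length ys \<Longrightarrow> xs = ys"
  by (auto simp: suffix_def)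

locale wt =
  fixes m :: nat and p :: "nat \<Rightarrow> real" and S :: "nat list"
  assumes pnn: "\<And>i. i \<in> {1..m} \<Longrightarrow> p i \<ge> 0" and psum: "(\<Sum>i=1..m. p i) = 1"
    and Sne: "S \<noteq> []" and Sset: "set S \<subseteq> {1..m}" and Spos: "\<And>a. a \<in> set S \<Longrightarrow> p a > 0"

context wt
begin

definition aw :: "nat \<Rightarrow> real" where
  "aw k = (\<Sum>w\<in>Wd m k. word_prob p w * (if sublist S w then 0 else 1))"

definition qw :: "nat \<Rightarrow> real" where
  "qw k = (\<Sum>w\<in>Wd m k. word_prob p w * (if ocfirst S w then 1 else 0))"

lemma P_nonneg: "w \<in> Wd m N \<Longrightarrow> word_prob p w \<ge> 0"
  using word_prob_nonneg[OF pnn] by (auto simp: Wd_def)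

lemma aw_nonneg: "aw k \<ge> 0"
  unfolding aw_def by (intro sum_nonneg) (simp add: P_nonneg)

lemma qw_nonneg: "qw k \<ge> 0"
  unfolding qw_def by (intro sum_nonneg) (simp add: P_nonneg)

lemma aw_le1: "aw k \<le> 1"
proof -
  have "aw k \<le> (\<Sum>w\<in>Wd m k. word_prob p w)"
    unfolding aw_def by (intro sum_mono) (simp add: P_nonneg)
  then show ?thesis using sum_Wd_one[OF psum] by simp
qed

lemma Wd0: "Wd m 0 = {[]}" by (auto simp: Wd_def)

lemma qw0: "qw 0 = 0"
  using Sne by (simp add: qw_def Wd0 ocfirst_def)

lemma aw0: "aw 0 = 1"
  using Sne by (simp add: aw_def Wd0 word_prob_def)

lemma qw_small: "j < length S \<Longrightarrow> qw j = 0"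
  unfolding qw_def
  by (intro sum.neutral) (auto simp: ocfirst_def Wd_def dest: sublist_length_le)

lemma qa: "qw (Suc k) = aw k - aw (Suc k)"
proof -
  have "aw k = (\<Sum>u\<in>Wd m k. \<Sum>v\<in>Wd m 1. word_prob p u * word_prob p v * (if sublist S u then 0 else 1))"
    unfolding aw_def using sum_Wd_one[OF psum, of 1]
    by (simp add: sum_distrib_left[symmetric] sum_distrib_right[symmetric] mult.commute mult.left_commute)
  also have "\<dots> = (\<Sum>u\<in>Wd m k. \<Sum>v\<in>Wd m 1. word_prob p u * word_prob p v * (if sublist S (butlast (u @ v)) then 0 else 1))"
    by (intro sum.cong refl) (auto simp: Wd_def length_Suc_conv)
  also have "\<dots> = (\<Sum>w\<in>Wd m (Suc k). word_prob p w * (if sublist S (butlast w) then 0 else 1))"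
    using sum_Wd_add[where m=m and k=k and l=1 and p=p and f="\<lambda>w. if sublist S (butlast w) then 0 else 1"] by simp
  finally have a1: "aw k = \<dots>" .
  have "qw (Suc k) = (\<Sum>w\<in>Wd m (Suc k). word_prob p w * (if sublist S (butlast w) then 0 else 1)
        - word_prob p w * (if sublist S w then 0 else 1))"
    unfolding qw_def
  proof (intro sum.cong refl)
    fix w :: "nat list"
    have "sublist S (butlast w) \<Longrightarrow> sublist S w"
      using sublist_butlast sublist_order.order.trans by blast
    then show "word_prob p w * (if ocfirst S w then 1 else 0) =
      word_prob p w * (if sublist S (butlast w) then 0 else 1) - word_prob p w * (if sublist S w then 0 else 1)"
      by (auto simp: ocfirst_def)
  qed
  also have "\<dots> = aw k - aw (Suc k)"
    by (simp only: sum_subtractf a1) (simp add: aw_def)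
  finally show ?thesis .
qed

lemma overlap_in_Wd: "R \<in> overlaps S \<Longrightarrow> R \<in> Wd m (length R)"
  using Sset by (auto simp: overlaps_def Wd_def dest: set_mono_prefix)

lemma P_pos_overlap: "R \<in> overlaps S \<Longrightarrow> word_prob p R > 0"
proof -
  assume R: "R \<in> overlaps S"
  then have "set R \<subseteq> set S" by (auto simp: overlaps_def dest: set_mono_prefix)
  then have "\<forall>a\<in>set R. p a > 0" using Spos by auto
  then show ?thesis unfolding word_prob_def by (induction R) auto
qed

lemma aq: "aw k = (\<Sum>R\<in>overlaps S. qw (k + length R) / word_prob p R)"
proof -
  have inner: "qw (k + length R) / word_prob p R = (\<Sum>u\<in>Wd m k. word_prob p u * (if ocfirst S (u @ R) then 1 else 0))"
    if R: "R \<in> overlaps S" for R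
  proof -
    have RW: "R \<in> Wd m (length R)" by (rule overlap_in_Wd[OF R])
    have PR: "word_prob p R > 0" by (rule P_pos_overlap[OF R])
    have sR: "suffix R S" and lR: "length R \<le> length S" using R
      by (auto simp: overlaps_def dest: prefix_length_le)
    have "qw (k + length R) = (\<Sum>u\<in>Wd m k. \<Sum>t\<in>Wd m (length R). word_prob p u * word_prob p t * (if ocfirst S (u @ t) then 1 else 0))"
      unfolding qw_def by (rule sum_Wd_add)
    also have "\<dots> = (\<Sum>u\<in>Wd m k. \<Sum>t\<in>Wd m (length R). if t = R then word_prob p u * word_prob p R * (if ocfirst S (u @ R) then 1 else 0) else 0)"
    proof (intro sum.cong refl)
      fix u t assume t: "t \<in> Wd m (length R)"
      have "t = R" if oc: "ocfirst S (u @ t)"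
      proof -
        have "suffix S (u @ t)" by (rule ocfirst_suffix[OF oc])
        moreover have "suffix t (u @ t)" by (simp add: suffix_def)
        moreover have "length t \<le> length S" using t lR by (simp add: Wd_def)
        ultimately have "suffix t S" using suffix_length_suffix by blast
        then have "suffix t R" using sR suffix_length_suffix t by (fastforce simp: Wd_def)
        then show ?thesis using t by (intro suffix_same_length) (auto simp: Wd_def)
      qed
      then show "word_prob p u * word_prob p t * (if ocfirst S (u @ t) then 1 else 0) =
        (if t = R then word_prob p u * word_prob p R * (if ocfirst S (u @ R) then 1 else 0) else 0)"
        by auto
    qed
    also have "\<dots> = (\<Sum>u\<in>Wd m k. word_prob p u * word_prob p R * (if ocfirst S (u @ R) then 1 else 0))"
      using RW finite_Wd by (simp add: sum.delta)
    finally show ?thesis using PR by (simp add: sum_divide_distrib)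
  qed
  have "(\<Sum>R\<in>overlaps S. qw (k + length R) / word_prob p R)
      = (\<Sum>R\<in>overlaps S. \<Sum>u\<in>Wd m k. word_prob p u * (if ocfirst S (u @ R) then 1 else 0))"
    by (intro sum.cong refl inner)
  also have "\<dots> = (\<Sum>u\<in>Wd m k. word_prob p u * (\<Sum>R\<in>overlaps S. (if ocfirst S (u @ R) then 1 else 0)))"
    by (subst sum.swap) (simp add: sum_distrib_left)
  also have "\<dots> = (\<Sum>u\<in>Wd m k. word_prob p u * real (card {R \<in> overlaps S. ocfirst S (u @ R)}))"
    by (intro sum.cong refl) (simp add: sum.inter_filter[symmetric] finite_overlaps)
  also have "\<dots> = aw k"
    unfolding aw_def by (intro sum.cong refl) (simp add: card_ocfirst[OF Sne])
  finally show ?thesis by simp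
qed

lemma PS_pos: "word_prob p S > 0"
  using P_pos_overlap[of S] Sne by (simp add: overlaps_def)

lemma p_le1: "i \<in> {1..m} \<Longrightarrow> p i \<le> 1"
  using member_le_sum[of i "{1..m}" p] pnn psum by simp

lemma PS_le1: "word_prob p S \<le> 1"
  using Sset unfolding word_prob_def
proof (induction S)
  case (Cons a S)
  then have "p a \<ge> 0" "p a \<le> 1" "prod_list (map p S) \<ge> 0" "prod_list (map p S) \<le> 1"
    using pnn p_le1 word_prob_nonneg[OF pnn, where w=S] by (auto simp: word_prob_def)
  then show ?case by (simp add: mult_le_one)
qed simp

lemma ageom: "aw (k + length S) \<le> (1 - word_prob p S) * aw k"
proof -
  let ?l = "length S"
  have "aw (k + ?l) = (\<Sum>u\<in>Wd m k. \<Sum>v\<in>Wd m ?l. word_prob p u * word_prob p v * (if sublist S (u @ v) then 0 else 1))"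
    unfolding aw_def by (rule sum_Wd_add)
  also have "\<dots> \<le> (\<Sum>u\<in>Wd m k. \<Sum>v\<in>Wd m ?l. (word_prob p u * (if sublist S u then 0 else 1)) * (word_prob p v * (if v = S then 0 else 1)))"
  proof (intro sum_mono)
    fix u v assume u: "u \<in> Wd m k" and v: "v \<in> Wd m ?l"
    have "sublist S u \<Longrightarrow> sublist S (u @ v)" by (metis sublist_append_rightI sublist_order.order.trans)
    moreover have "v = S \<Longrightarrow> sublist S (u @ v)" by simp
    moreover have "word_prob p u * word_prob p v \<ge> 0" using P_nonneg u v by simp
    ultimately show "word_prob p u * word_prob p v * (if sublist S (u @ v) then 0 else 1) \<le>
      (word_prob p u * (if sublist S u then 0 else 1)) * (word_prob p v * (if v = S then 0 else 1))"
      by auto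
  qed
  also have "\<dots> = aw k * (\<Sum>v\<in>Wd m ?l. word_prob p v * (if v = S then 0 else 1))"
    unfolding aw_def by (simp add: sum_product)
  also have "(\<Sum>v\<in>Wd m ?l. word_prob p v * (if v = S then 0 else 1)) = 
      (\<Sum>v\<in>Wd m ?l. word_prob p v) - (\<Sum>v\<in>Wd m ?l. if v = S then word_prob p v else 0)"
    by (subst sum_subtractf[symmetric]) (intro sum.cong refl, simp)
  also have "\<dots> = 1 - word_prob p S"
    using sum_Wd_one[OF psum] Sset finite_Wd by (simp add: sum.delta Wd_def)
  finally show ?thesis by (simp add: mult.commute)
qed

end



lemma summable_pow_geom:
  fixes x :: real
  assumes "\<bar>x\<bar> < 1"
  shows "summable (\<lambda>j. real j ^ i * x ^ j)"
  using assms
proof (induction i arbitrary: x)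
  case 0
  then show ?case using summable_geometric[of x] by simp
next
  case (Suc i)
  have "summable (\<lambda>n. diffs (\<lambda>j. real j ^ i) n * x ^ n)"
    by (rule termdiff_converges[of x 1]) (use Suc in auto)
  then have "summable (\<lambda>n. real (Suc n) ^ Suc i * x ^ n)"
    by (simp add: diffs_def)
  then show ?case
    using summable_powser_split_head[of "\<lambda>n. real n ^ Suc i" x] by simp
qed

context wt
begin

definition th0 :: real where "th0 = max (1 - word_prob p S) (1/2)"
definition rho :: real where "rho = root (length S) th0"

lemma th0_props: "0 < th0" "th0 < 1" "1 - word_prob p S \<le> th0"
  using PS_pos by (auto simp: th0_def)

lemma lS: "length S > 0" using Sne by simp

lemma rho_props: "0 < rho" "rho < 1" "rho ^ length S = th0"
  using th0_props lS by (auto simp: rho_def real_root_gt_zero)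

lemma aw_step: "aw (k + length S) \<le> th0 * aw k"
  using ageom[of k] aw_nonneg[of k] th0_props(3) mult_right_mono by fastforce

lemma aw_blocks: "aw (i * length S + s) \<le> th0 ^ i"
proof (induction i)
  case 0 then show ?case using aw_le1 by simp
next
  case (Suc i)
  have "aw (Suc i * length S + s) = aw ((i * length S + s) + length S)" by (simp add: algebra_simps)
  also have "\<dots> \<le> th0 * aw (i * length S + s)" by (rule aw_step)
  also have "\<dots> \<le> th0 * th0 ^ i" using Suc th0_props by (intro mult_left_mono) auto
  finally show ?case by simp
qed

lemma aw_rho: "aw k \<le> rho ^ k / th0"
proof -
  let ?l = "length S"
  define i where "i = k div ?l"
  have "aw k = aw (i * ?l + k mod ?l)" by (simp add: i_def)
  also have "\<dots> \<le> th0 ^ i" by (rule aw_blocks)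
  also have "th0 ^ i = rho ^ (?l * i)" using rho_props by (simp add: power_mult)
  also have "rho ^ (?l * i) = rho ^ (?l * i + ?l) / th0"
    using rho_props th0_props by (simp add: power_add)
  also have "rho ^ (?l * i + ?l) \<le> rho ^ k"
  proof (rule power_decreasing)
    have e: "k = ?l * i + k mod ?l" by (simp add: i_def)
    have "k mod ?l < ?l" using lS by simp
    then have "k < ?l * i + ?l" using e by linarith
    then show "k \<le> ?l * i + ?l" by simp
  qed (use rho_props in auto)
  then have "rho ^ (?l * i + ?l) / th0 \<le> rho ^ k / th0" using th0_props by (simp add: divide_right_mono)
  finally show ?thesis .
qed

lemma aw_lim: "aw \<longlonglongrightarrow> 0"
proof (rule Lim_null_comparison)
  show "\<forall>\<^sub>F k in sequentially. norm (aw k) \<le> rho ^ k / th0"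
    using aw_rho aw_nonneg by simp
  show "(\<lambda>k. rho ^ k / th0) \<longlonglongrightarrow> 0"
    using rho_props by (intro tendsto_divide_zero LIMSEQ_power_zero) auto
qed

lemma qw_le: "qw j \<le> rho ^ j / (rho * th0)"
proof (cases j)
  case 0 then show ?thesis using qw0 rho_props th0_props by simp
next
  case (Suc k)
  have "qw j \<le> aw k" using qa[of k] aw_nonneg[of "Suc k"] Suc by simp
  also have "\<dots> \<le> rho ^ k / th0" by (rule aw_rho)
  also have "rho ^ k / th0 = rho ^ j / (rho * th0)" using Suc rho_props by simp
  finally show ?thesis .
qed

lemma summable_qw: "summable (\<lambda>j. real j ^ i * qw j)"
proof (rule summable_comparison_test')
  show "summable (\<lambda>j. (1 / (rho * th0)) * (real j ^ i * rho ^ j))"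
    using summable_pow_geom[of rho i] rho_props by (intro summable_mult) auto
  fix j :: nat
  have "norm (real j ^ i * qw j) = real j ^ i * qw j" using qw_nonneg by simp
  also have "\<dots> \<le> real j ^ i * (rho ^ j / (rho * th0))" by (intro mult_left_mono qw_le) auto
  finally show "norm (real j ^ i * qw j) \<le> (1 / (rho * th0)) * (real j ^ i * rho ^ j)" by simp
qed

lemma moments_qw:
  "(\<Sum>j. real j ^ n * qw j) =
   H (\<lambda>k. \<Sum>R\<in>overlaps S. ((1 - real (length R)) ^ k - (- real (length R)) ^ k) / word_prob p R) n"
proof (rule moment_recursion[where a = aw])
  show "finite (overlaps S)" by (rule finite_overlaps)
  show "qw 0 = 0" by (rule qw0)
  show "\<And>k. qw (Suc k) = aw k - aw (Suc k)" by (rule qa)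
  show "\<And>k. aw k = (\<Sum>R\<in>overlaps S. qw (k + length R) / word_prob p R)" by (rule aq)
  show "\<And>R j. R \<in> overlaps S \<Longrightarrow> j < length R \<Longrightarrow> qw j = 0"
    using qw_small by (auto simp: overlaps_def dest!: prefix_length_le)
  show "aw 0 = 1" by (rule aw0)
  show "aw \<longlonglongrightarrow> 0" by (rule aw_lim)
  show "\<And>i. summable (\<lambda>j. real j ^ i * qw j)" by (rule summable_qw)
qed

end



lemma meas_stake_pmf:
  fixes M0 :: "nat pmf"
  shows "stake N \<in> measurable (stream_space (measure_pmf M0)) (count_space UNIV)"
proof -
  have eq: "sets (stream_space (measure_pmf M0)) = sets (stream_space (count_space UNIV))"
    by (rule sets_stream_space_cong) simp
  show ?thesis
    by (subst measurable_cong_sets[OF eq refl]) (rule measurable_stake)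
qed

context wt
begin

definition fdie :: "nat \<Rightarrow> real" where "fdie i = (if i \<in> {1..m} then p i else 0)"

lemma fdie_nonneg: "fdie i \<ge> 0" using pnn by (simp add: fdie_def)

lemma fdie_prob: "(\<integral>\<^sup>+x. ennreal (fdie x) \<partial>count_space UNIV) = 1"
proof -
  have "(\<integral>\<^sup>+x. ennreal (fdie x) \<partial>count_space UNIV) = (\<Sum>x\<in>{1..m}. ennreal (fdie x))"
    by (rule nn_integral_count_space') (auto simp: fdie_def)
  also have "\<dots> = ennreal (\<Sum>x\<in>{1..m}. fdie x)" using fdie_nonneg by (simp add: sum_ennreal)
  also have "(\<Sum>x\<in>{1..m}. fdie x) = 1" using psum by (simp add: fdie_def)
  finally show ?thesis by simp
qed

lemma pmf_die: "pmf (die m p) i = fdie i"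
proof -
  have "die m p = embed_pmf fdie" by (simp add: die_def fdie_def[abs_def])
  then show ?thesis using pmf_embed_pmf[of fdie, OF fdie_nonneg fdie_prob] by simp
qed

abbreviation "Om \<equiv> stream_space (measure_pmf (die m p))"

lemma prob_Om: "prob_space Om"
  by (rule prob_space.prob_space_stream_space[OF prob_space_measure_pmf])

lemma nn_stake:
  assumes "\<And>w. g w \<ge> 0"
  shows "(\<integral>\<^sup>+\<omega>. ennreal (g (stake N \<omega>)) \<partial>Om) = ennreal (\<Sum>w\<in>Wd m N. word_prob p w * g w)"
  using assms
proof (induction N arbitrary: g)
  case 0
  have "(\<integral>\<^sup>+\<omega>. ennreal (g (stake 0 \<omega>)) \<partial>Om) = ennreal (g [])"
    using prob_space.emeasure_space_1[OF prob_Om] by simp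
  then show ?case by (simp add: Wd0 word_prob_def)
next
  case (Suc N)
  have meas: "(\<lambda>\<omega>. ennreal (g (stake (Suc N) \<omega>))) \<in> borel_measurable Om"
  proof -
    have "(\<lambda>w. ennreal (g w)) \<in> borel_measurable (count_space UNIV)" by simp
    from measurable_compose[OF meas_stake_pmf this] show ?thesis .
  qed
  have "(\<integral>\<^sup>+\<omega>. ennreal (g (stake (Suc N) \<omega>)) \<partial>Om) =
        (\<integral>\<^sup>+x. (\<integral>\<^sup>+\<omega>. ennreal (g (stake (Suc N) (x ## \<omega>))) \<partial>Om) \<partial>measure_pmf (die m p))"
    by (rule prob_space.nn_integral_stream_space[OF prob_space_measure_pmf meas])
  also have "\<dots> = (\<integral>\<^sup>+x. ennreal (\<Sum>w\<in>Wd m N. word_prob p w * g (x # w)) \<partial>measure_pmf (die m p))"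
    using Suc.IH[of "\<lambda>w. g (_ # w)"] Suc.prems by simp
  also have "\<dots> = (\<Sum>x\<in>{1..m}. ennreal (\<Sum>w\<in>Wd m N. word_prob p w * g (x # w)) * pmf (die m p) x)"
  proof (rule nn_integral_measure_pmf_support)
    fix x assume "x \<in> set_pmf (die m p)" "x \<notin> {1..m}"
    then show "ennreal (\<Sum>w\<in>Wd m N. word_prob p w * g (x # w)) = 0"
      by (auto simp: set_pmf_iff pmf_die fdie_def split: if_splits)
  qed auto
  also have "\<dots> = (\<Sum>x\<in>{1..m}. ennreal (p x * (\<Sum>w\<in>Wd m N. word_prob p w * g (x # w))))"
  proof (intro sum.cong refl)
    fix x assume x: "x \<in> {1..m}"
    have "(\<Sum>w\<in>Wd m N. word_prob p w * g (x # w)) \<ge> 0"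
      using P_nonneg Suc.prems by (intro sum_nonneg) auto
    then show "ennreal (\<Sum>w\<in>Wd m N. word_prob p w * g (x # w)) * pmf (die m p) x =
        ennreal (p x * (\<Sum>w\<in>Wd m N. word_prob p w * g (x # w)))"
      using x pnn[OF x] by (simp add: pmf_die fdie_def ennreal_mult' mult.commute)
  qed
  also have "\<dots> = ennreal (\<Sum>x\<in>{1..m}. p x * (\<Sum>w\<in>Wd m N. word_prob p w * g (x # w)))"
  proof (rule sum_ennreal)
    fix x assume x: "x \<in> {1..m}"
    have "(\<Sum>w\<in>Wd m N. word_prob p w * g (x # w)) \<ge> 0"
      using P_nonneg Suc.prems by (intro sum_nonneg) auto
    then show "p x * (\<Sum>w\<in>Wd m N. word_prob p w * g (x # w)) \<ge> 0" using pnn[OF x] by simp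
  qed
  also have "(\<Sum>x\<in>{1..m}. p x * (\<Sum>w\<in>Wd m N. word_prob p w * g (x # w))) =
             (\<Sum>w\<in>Wd m (Suc N). word_prob p w * g w)"
  proof -
    have inj: "inj_on (\<lambda>(xs, n). n # xs) (Wd m N \<times> {1..m})" by (auto simp: inj_on_def)
    have "(\<Sum>w\<in>Wd m (Suc N). word_prob p w * g w) = (\<Sum>(xs,n)\<in>Wd m N \<times> {1..m}. p n * word_prob p xs * g (n # xs))"
      unfolding Wd_Suc by (subst sum.reindex[OF inj]) (simp add: case_prod_beta word_prob_def)
    also have "\<dots> = (\<Sum>xs\<in>Wd m N. \<Sum>n\<in>{1..m}. p n * word_prob p xs * g (n # xs))"
      by (simp add: sum.cartesian_product)
    also have "\<dots> = (\<Sum>n\<in>{1..m}. p n * (\<Sum>xs\<in>Wd m N. word_prob p xs * g (n # xs)))"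
      by (subst sum.swap) (simp add: sum_distrib_left mult.assoc)
    finally show ?thesis by simp
  qed
  finally show ?case .
qed

end



context wt
begin

lemma pred_stake: "Measurable.pred Om (\<lambda>\<omega>. P (stake k \<omega>))"
proof -
  have "(\<lambda>w. P w) \<in> measurable (count_space UNIV) (count_space UNIV)" by simp
  from measurable_compose[OF meas_stake_pmf this] show ?thesis by (simp add: pred_def)
qed

lemma sub_mono:
  assumes "sublist S (stake j \<omega>)" "j \<le> j'"
  shows "sublist S (stake j' \<omega>)"
proof -
  have "stake j' \<omega> = stake j \<omega> @ stake (j' - j) (sdrop j \<omega>)"
    using assms(2) stake_add[where m=j and n="j' - j" and s=\<omega>] by (metis le_add_diff_inverse)
  then have "prefix (stake j \<omega>) (stake j' \<omega>)" unfolding prefix_def by blast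
  then show ?thesis using assms(1) sublist_mono_prefix by blast
qed

lemma butlast_stake: "butlast (stake j \<omega>) = stake (j - 1) \<omega>"
proof (cases j)
  case (Suc k)
  then show ?thesis by (simp only: stake_Suc butlast_snoc) simp
qed simp

lemma ocfirst_iff:
  assumes ex: "\<exists>k. sublist S (stake k \<omega>)"
  shows "ocfirst S (stake j \<omega>) \<longleftrightarrow> j = waiting_time S \<omega>"
proof -
  define y where "y = waiting_time S \<omega>"
  have y: "y = (LEAST k. sublist S (stake k \<omega>))" by (simp add: y_def waiting_time_def)
  have Sy: "sublist S (stake y \<omega>)" using ex unfolding y by (metis LeastI)
  have y1: "y \<ge> 1" using Sy Sne by (cases y) auto
  have nS: "\<not> sublist S (stake k \<omega>)" if "k < y" for k
    using not_less_Least[of k "\<lambda>k. sublist S (stake k \<omega>)"] that y by simp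
  show ?thesis
  proof
    assume oc: "ocfirst S (stake j \<omega>)"
    then have Sj: "sublist S (stake j \<omega>)" and nb: "\<not> sublist S (stake (j - 1) \<omega>)"
      by (auto simp: ocfirst_def butlast_stake)
    have "y \<le> j" unfolding y by (rule Least_le[of "\<lambda>k. sublist S (stake k \<omega>)", OF Sj])
    moreover have "\<not> y < j"
    proof
      assume "y < j"
      then have "sublist S (stake (j - 1) \<omega>)" using sub_mono[OF Sy] by simp
      then show False using nb by simp
    qed
    ultimately show "j = waiting_time S \<omega>" by (simp add: y_def)
  next
    assume "j = waiting_time S \<omega>"
    then have jy: "j = y" by (simp add: y_def)
    show "ocfirst S (stake j \<omega>)"
      using Sy nS[of "y - 1"] y1 jy by (simp add: ocfirst_def butlast_stake)
  qed
qed

lemma emeasure_notsub: "emeasure Om {\<omega>\<in>space Om. \<not> sublist S (stake k \<omega>)} = ennreal (aw k)"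
proof -
  have mset: "{\<omega>\<in>space Om. \<not> sublist S (stake k \<omega>)} \<in> sets Om"
    by (rule predE[OF pred_stake])
  have "emeasure Om {\<omega>\<in>space Om. \<not> sublist S (stake k \<omega>)} =
        (\<integral>\<^sup>+\<omega>. indicator {\<omega>\<in>space Om. \<not> sublist S (stake k \<omega>)} \<omega> \<partial>Om)"
    by (rule nn_integral_indicator[OF mset, symmetric])
  also have "\<dots> = (\<integral>\<^sup>+\<omega>. ennreal (if sublist S (stake k \<omega>) then 0 else 1) \<partial>Om)"
    by (intro nn_integral_cong) (simp add: space_stream_space indicator_def)
  also have "\<dots> = ennreal (aw k)"
    by (subst nn_stake) (auto simp: aw_def)
  finally show ?thesis .
qed

lemma null_nosub: "emeasure Om {\<omega>\<in>space Om. \<forall>k. \<not> sublist S (stake k \<omega>)} = 0"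
proof -
  let ?N = "{\<omega>\<in>space Om. \<forall>k. \<not> sublist S (stake k \<omega>)}"
  have le: "emeasure Om ?N \<le> ennreal (aw k)" for k
  proof -
    have "emeasure Om ?N \<le> emeasure Om {\<omega>\<in>space Om. \<not> sublist S (stake k \<omega>)}"
      by (rule emeasure_mono) (auto intro: predE[OF pred_stake])
    then show ?thesis by (simp add: emeasure_notsub)
  qed
  have "(\<lambda>k. ennreal (aw k)) \<longlonglongrightarrow> ennreal 0"
    using aw_lim by (intro tendsto_ennrealI)
  then have "emeasure Om ?N \<le> ennreal 0"
    by (rule LIMSEQ_le_const) (use le in auto)
  then show ?thesis by simp
qed

lemma AE_sub: "AE \<omega> in Om. \<exists>k. sublist S (stake k \<omega>)"
proof (rule AE_I[OF _ null_nosub])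
  show "{\<omega>\<in>space Om. \<forall>k. \<not> sublist S (stake k \<omega>)} \<in> sets Om"
    by (rule predE) (intro pred_intros_countable pred_stake)
qed auto

lemma pointwise:
  assumes ex: "\<exists>k. sublist S (stake k \<omega>)"
  shows "ennreal (real (waiting_time S \<omega>) ^ n) =
    (\<Sum>j. ennreal (real j ^ n * (if ocfirst S (stake j \<omega>) then 1 else 0)))"
proof -
  let ?y = "waiting_time S \<omega>"
  have "(\<lambda>j. ennreal (real j ^ n * (if ocfirst S (stake j \<omega>) then 1 else 0))) =
        (\<lambda>j. if j = ?y then ennreal (real j ^ n) else 0)"
    using ocfirst_iff[OF ex] by (intro ext) auto
  moreover have "(\<lambda>j. if j = ?y then ennreal (real j ^ n) else 0) sums ennreal (real ?y ^ n)"
    by (rule sums_single)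
  ultimately show ?thesis by (simp add: sums_iff)
qed

lemma emom:
  "(\<integral>\<^sup>+\<omega>. ennreal (real (waiting_time S \<omega>) ^ n) \<partial>Om) = ennreal (\<Sum>j. real j ^ n * qw j)"
proof -
  have "(\<integral>\<^sup>+\<omega>. ennreal (real (waiting_time S \<omega>) ^ n) \<partial>Om) =
        (\<integral>\<^sup>+\<omega>. (\<Sum>j. ennreal (real j ^ n * (if ocfirst S (stake j \<omega>) then 1 else 0))) \<partial>Om)"
    by (rule nn_integral_cong_AE) (use AE_sub pointwise in auto)
  also have "\<dots> = (\<Sum>j. (\<integral>\<^sup>+\<omega>. ennreal (real j ^ n * (if ocfirst S (stake j \<omega>) then 1 else 0)) \<partial>Om))"
  proof (rule nn_integral_suminf)
    fix j
    have "(\<lambda>w. ennreal (real j ^ n * (if ocfirst S w then 1 else 0))) \<in> borel_measurable (count_space UNIV)" by simp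
    from measurable_compose[OF meas_stake_pmf this]
    show "(\<lambda>\<omega>. ennreal (real j ^ n * (if ocfirst S (stake j \<omega>) then 1 else 0))) \<in> borel_measurable Om" .
  qed
  also have "\<dots> = (\<Sum>j. ennreal (real j ^ n * qw j))"
  proof (intro suminf_cong)
    fix j
    show "(\<integral>\<^sup>+\<omega>. ennreal (real j ^ n * (if ocfirst S (stake j \<omega>) then 1 else 0)) \<partial>Om) = ennreal (real j ^ n * qw j)"
      by (subst nn_stake) (auto simp: qw_def sum_distrib_left mult.left_commute)
  qed
  also have "\<dots> = ennreal (\<Sum>j. real j ^ n * qw j)"
    by (rule suminf_ennreal2) (use qw_nonneg summable_qw in auto)
  finally show ?thesis .
qed

end

theorem theorem4p8:
  fixes m :: nat and p :: "nat \<Rightarrow> real" and S :: "nat list" and n :: nat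
  assumes "m \<ge> 1"
    and "\<And>i. i \<in> {1..m} \<Longrightarrow> p i \<ge> 0"
    and "(\<Sum>i=1..m. p i) = 1"
    and "S \<noteq> []" and "set S \<subseteq> {1..m}"
    and "\<And>a. a \<in> set S \<Longrightarrow> p a > 0"
    and "n \<ge> 1"
  shows "(\<integral>\<^sup>+ \<omega>. ennreal (real (waiting_time S \<omega>) ^ n) \<partial>stream_space (measure_pmf (die m p)))
    = ennreal (\<Sum>\<pi>\<in>set_partitions n. fact (card \<pi>) *
        (\<Prod>B\<in>\<pi>. \<Sum>R\<in>overlaps S.
           ((1 - real (length R)) ^ card B - (- real (length R)) ^ card B) / word_prob p R))"
proof -
  interpret wt m p S using assms by unfold_locales auto
  show ?thesis
    using emom[of n] moments_qw[of n]
      set_partitions_H[where n=n and c="\<lambda>k. \<Sum>R\<in>overlaps S. ((1 - real (length R)) ^ k - (- real (length R)) ^ k) / word_prob p R"]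
    by simp
qed


end
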